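(* Let $\rho_1\in(0,1)$, $\rho_2\in(0,1-\rho_1)$ and let $\eta$ be a sample of $\mu^{\rho_1,\rho_2}$. There are constants $C,c>0$ such that for each interval $I\subseteq\mathbb{Z}$ of length $|I|=\ell$, \[ \mathbb{P}(\exists i\in I:\ \eta(i)=2)\ge1-Ce^{-c\ell}. \]
   Context: $\mu^{\rho_1,\rho_2}$ (queueing construction): let $(a(i))_{i\in\mathbb{Z}}$, $(s(i))_{i\in\mathbb{Z}}$ be independent families of i.i.d. Bernoulli variables with parameters $\rho_1$ and $\rho_1+\rho_2$; $\mathcal{A}_{[i,j]}=\sum_{k=i}^ja(k)$, $\mathcal{S}_{[i,j]}=\sum_{k=i}^js(k)$ (empty sums $0$); $Q_i=\sup_{j\ge i-1}(\mathcal{A}_{[i,j]}-\mathcal{S}_{[i,j]})$; $d(i)=1$ iff $s(i)=1$ and ($a(i)=1$ or $Q_{i+1}\ge1$) (equivalently, each $i$ with $a(i)=1$ is matched to the largest $j\le i$ with $s(j)=1$ not yet matched, and $d=1$ at matched sites). Set $\eta(i)=1$ if $d(i)=1$, $\eta(i)=2$ if $s(i)=1,d(i)=0$, $\eta(i)=+\infty$ if $s(i)=0$; $\mu^{\rho_1,\rho_2}$ is the law of $\eta$ (the translation-invariant stationary measure of the two-species TASEP; value $2$ = second class particle). An interval of length $\ell$ means $I=[u,v]\cap\mathbb{Z}$ with $v-u=\ell$. *)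

theory Defs
  imports "HOL-Probability.Probability"
begin

text \<open>Queueing construction of the stationary measure of the two-species TASEP.\<close>

definition bern_fam :: "real \<Rightarrow> (int \<Rightarrow> bool) measure" where
  "bern_fam p = (\<Pi>\<^sub>M i\<in>(UNIV::int set). measure_pmf (bernoulli_pmf p))"

definition queue_space :: "real \<Rightarrow> real \<Rightarrow> ((int \<Rightarrow> bool) \<times> (int \<Rightarrow> bool)) measure" where
  "queue_space \<rho>1 \<rho>2 = bern_fam \<rho>1 \<Otimes>\<^sub>M bern_fam (\<rho>1 + \<rho>2)"

text \<open>Counting sums over [i,j] (empty, hence 0, when j < i).\<close>
definition cnt :: "(int \<Rightarrow> bool) \<Rightarrow> int \<Rightarrow> int \<Rightarrow> int" where
  "cnt x i j = (\<Sum>k\<in>{i..j}. if x k then 1 else 0)"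

definition queueQ :: "(int \<Rightarrow> bool) \<Rightarrow> (int \<Rightarrow> bool) \<Rightarrow> int \<Rightarrow> ereal" where
  "queueQ a s i = (SUP j\<in>{i - 1..}. ereal (real_of_int (cnt a i j - cnt s i j)))"

definition departure :: "(int \<Rightarrow> bool) \<Rightarrow> (int \<Rightarrow> bool) \<Rightarrow> int \<Rightarrow> bool" where
  "departure a s i \<longleftrightarrow> s i \<and> (a i \<or> queueQ a s (i + 1) \<ge> 1)"

definition eta :: "(int \<Rightarrow> bool) \<Rightarrow> (int \<Rightarrow> bool) \<Rightarrow> int \<Rightarrow> enat" where
  "eta a s i = (if departure a s i then 1 else if s i then 2 else \<infinity>)"

end

theory Submission
  imports Defs
begin


abbreviation "BM p \<equiv> (\<lambda>_::int. measure_pmf (bernoulli_pmf p))"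

lemma pps: "product_prob_space (BM p)"
  by (intro product_prob_spaceI measure_pmf.prob_space_axioms)

lemma ps_bern: "prob_space (bern_fam p)"
proof -
  interpret product_prob_space "BM p" UNIV by (rule pps)
  show ?thesis unfolding bern_fam_def by (rule P.prob_space_axioms)
qed

lemma bern_indep0:
  assumes "finite J" "J \<noteq> {}"
  shows "prob_space.indep_vars (bern_fam p) (BM p) (\<lambda>k \<omega>. \<omega> k) J"
proof -
  interpret product_prob_space "BM p" UNIV by (rule pps)
  have "distr (PiM UNIV (BM p)) (PiM J (BM p)) (\<lambda>x. restrict x J) = PiM J (BM p)"
    using assms by (intro distr_PiM_restrict_finite) auto
  moreover have "(\<Pi>\<^sub>M i\<in>J. distr (PiM UNIV (BM p)) (BM p i) (\<lambda>\<omega>. \<omega> i)) = PiM J (BM p)"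
    by (intro PiM_cong refl PiM_component) auto
  ultimately show ?thesis unfolding bern_fam_def
    using assms by (subst P.indep_vars_iff_distr_eq_PiM') (auto intro: measurable_component_singleton)
qed

lemma bern_indep:
  assumes "finite J" "J \<noteq> {}"
  shows "prob_space.indep_vars (bern_fam p) (\<lambda>_. borel) (\<lambda>k \<omega>. if \<omega> k then 1 else (0::real)) J"
proof -
  interpret prob_space "bern_fam p" by (rule ps_bern)
  show ?thesis
    by (rule indep_vars_compose2[OF bern_indep0[OF assms], where Y="\<lambda>k b. if b then 1 else (0::real)"]) auto
qed

lemma bern_exp:
  assumes "0 \<le> p" "p \<le> 1"
  shows "prob_space.expectation (bern_fam p) (\<lambda>\<omega>. if \<omega> k then 1 else (0::real)) = p"
proof -
  interpret product_prob_space "BM p" UNIV by (rule pps)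
  have "integral\<^sup>L (PiM UNIV (BM p)) (\<lambda>\<omega>. if \<omega> k then 1 else (0::real))
     = integral\<^sup>L (distr (PiM UNIV (BM p)) (BM p k) (\<lambda>\<omega>. \<omega> k)) (\<lambda>b. if b then 1 else (0::real))"
    by (subst integral_distr) (auto intro: measurable_component_singleton)
  also have "\<dots> = measure_pmf.expectation (bernoulli_pmf p) (\<lambda>b. if b then 1 else (0::real))"
    by (subst PiM_component) auto
  also have "\<dots> = p" using assms by simp
  finally show ?thesis unfolding bern_fam_def .
qed

lemma bern_tail:
  fixes p :: real
  assumes "finite J" "J \<noteq> {}" "0 \<le> p" "p \<le> 1" "\<epsilon> \<ge> 0"
  shows "measure (bern_fam p) {\<omega>\<in>space (bern_fam p). (\<Sum>k\<in>J. if \<omega> k then 1 else (0::real)) \<le> card J * p - \<epsilon>}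
           \<le> exp (-2 * \<epsilon>\<^sup>2 / card J)"
    and "measure (bern_fam p) {\<omega>\<in>space (bern_fam p). (\<Sum>k\<in>J. if \<omega> k then 1 else (0::real)) \<ge> card J * p + \<epsilon>}
           \<le> exp (-2 * \<epsilon>\<^sup>2 / card J)"
proof -
  interpret prob_space "bern_fam p" by (rule ps_bern)
  interpret H: Hoeffding_ineq "bern_fam p" J "\<lambda>k \<omega>. if \<omega> k then 1 else (0::real)" "\<lambda>_. 0" "\<lambda>_. 1"
      "\<Sum>k\<in>J. expectation (\<lambda>\<omega>. if \<omega> k then 1 else (0::real))"
    by unfold_locales (auto simp: assms bern_indep)
  have mu: "(\<Sum>k\<in>J. expectation (\<lambda>\<omega>. if \<omega> k then 1 else (0::real))) = card J * p"
    using assms by (simp add: bern_exp)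
  have s: "(\<Sum>i\<in>J. ((1::real) - 0)\<^sup>2) = card J" by simp
  have pos: "(\<Sum>i\<in>J. ((1::real) - 0)\<^sup>2) > 0" using assms by (simp add: card_gt_0_iff)
  show "measure (bern_fam p) {\<omega>\<in>space (bern_fam p). (\<Sum>k\<in>J. if \<omega> k then 1 else (0::real)) \<le> card J * p - \<epsilon>}
           \<le> exp (-2 * \<epsilon>\<^sup>2 / card J)"
    using H.Hoeffding_ineq_le[OF assms(5) pos] unfolding mu s .
  show "measure (bern_fam p) {\<omega>\<in>space (bern_fam p). (\<Sum>k\<in>J. if \<omega> k then 1 else (0::real)) \<ge> card J * p + \<epsilon>}
           \<le> exp (-2 * \<epsilon>\<^sup>2 / card J)"
    using H.Hoeffding_ineq_ge[OF assms(5) pos] unfolding mu s .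
qed

lemma Q_snd:
  assumes "{y\<in>space (bern_fam p2). P y} \<in> sets (bern_fam p2)"
  shows "measure (bern_fam p1 \<Otimes>\<^sub>M bern_fam p2) {\<omega>\<in>space (bern_fam p1 \<Otimes>\<^sub>M bern_fam p2). P (snd \<omega>)}
     = measure (bern_fam p2) {y\<in>space (bern_fam p2). P y}"
proof -
  interpret A: prob_space "bern_fam p1" by (rule ps_bern)
  interpret B: prob_space "bern_fam p2" by (rule ps_bern)
  have e: "{\<omega>\<in>space (bern_fam p1 \<Otimes>\<^sub>M bern_fam p2). P (snd \<omega>)} = space (bern_fam p1) \<times> {y\<in>space (bern_fam p2). P y}"
    by (auto simp: space_pair_measure)
  show ?thesis unfolding e measure_def
    using B.emeasure_pair_measure_Times[OF sets.top[of "bern_fam p1"] assms] by (simp add: A.emeasure_space_1)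
qed

lemma Q_fst:
  assumes "{y\<in>space (bern_fam p1). P y} \<in> sets (bern_fam p1)"
  shows "measure (bern_fam p1 \<Otimes>\<^sub>M bern_fam p2) {\<omega>\<in>space (bern_fam p1 \<Otimes>\<^sub>M bern_fam p2). P (fst \<omega>)}
     = measure (bern_fam p1) {y\<in>space (bern_fam p1). P y}"
proof -
  interpret A: prob_space "bern_fam p1" by (rule ps_bern)
  interpret B: prob_space "bern_fam p2" by (rule ps_bern)
  have e: "{\<omega>\<in>space (bern_fam p1 \<Otimes>\<^sub>M bern_fam p2). P (fst \<omega>)} = {y\<in>space (bern_fam p1). P y} \<times> space (bern_fam p2)"
    by (auto simp: space_pair_measure)
  show ?thesis unfolding e measure_def
    using B.emeasure_pair_measure_Times[OF assms sets.top[of "bern_fam p2"]] by (simp add: B.emeasure_space_1)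
qed



lemma cnt_Suc: "u \<le> k + 1 \<Longrightarrow> cnt x u (k+1) = cnt x u k + (if x (k+1) then 1 else 0)"
proof -
  assume "u \<le> k + 1"
  hence "{u..k+1} = insert (k+1) {u..k}" by auto
  thus ?thesis unfolding cnt_def by simp
qed

lemma cnt_split: "u \<le> i + 1 \<Longrightarrow> i \<le> j \<Longrightarrow> cnt x (i+1) j = cnt x u j - cnt x u i"
proof -
  assume h: "u \<le> i + 1" "i \<le> j"
  hence "{u..j} = {u..i} \<union> {i+1..j}" by auto
  moreover have "{u..i} \<inter> {i+1..j} = {}" by auto
  ultimately have "cnt x u j = cnt x u i + cnt x (i+1) j"
    unfolding cnt_def by (simp add: sum.union_disjoint)
  thus ?thesis by simp
qed

lemma queueQ_ge1: "queueQ a s (i+1) \<ge> 1 \<longleftrightarrow> (\<exists>j\<in>{i..}. 1 \<le> cnt a (i+1) j - cnt s (i+1) j)"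
proof
  assume h: "queueQ a s (i+1) \<ge> 1"
  show "\<exists>j\<in>{i..}. 1 \<le> cnt a (i+1) j - cnt s (i+1) j"
  proof (rule ccontr)
    assume "\<not> ?thesis"
    hence "\<forall>j\<in>{i..}. cnt a (i+1) j - cnt s (i+1) j \<le> 0" by force
    hence "queueQ a s (i+1) \<le> 0" unfolding queueQ_def by (auto intro!: SUP_least)
    from order_trans[OF h this] show False by simp
  qed
next
  assume "\<exists>j\<in>{i..}. 1 \<le> cnt a (i+1) j - cnt s (i+1) j"
  then obtain j where j: "j \<ge> i" "1 \<le> cnt a (i+1) j - cnt s (i+1) j" by auto
  have "ereal 1 \<le> ereal (real_of_int (cnt a (i+1) j - cnt s (i+1) j))" using j by simp
  also have "\<dots> \<le> queueQ a s (i+1)" unfolding queueQ_def by (rule SUP_upper) (use j in auto)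
  finally show "queueQ a s (i+1) \<ge> 1" by (simp add: one_ereal_def)
qed

lemma eta2_iff: "eta a s i = 2 \<longleftrightarrow> s i \<and> \<not> a i \<and> \<not> (\<exists>j\<in>{i..}. 1 \<le> cnt a (i+1) j - cnt s (i+1) j)"
  unfolding eta_def departure_def queueQ_ge1[symmetric] by (auto simp: numeral_eq_enat one_enat_def)

lemma comb:
  assumes A: "\<forall>j\<ge>u + int l. cnt a u j < cnt s u j"
  shows "\<exists>i\<in>{u..u+int l}. eta a s i = 2"
proof -
  define D where "D k = cnt s u k - cnt a u k" for k
  define K where "K = {u-1..u+int l}"
  have Kf: "finite K" "K \<noteq> {}" unfolding K_def by auto
  define m where "m = Min (D ` K)"
  have mK: "m \<in> D ` K" unfolding m_def using Kf by simp
  have mle: "\<And>k. k \<in> K \<Longrightarrow> m \<le> D k" unfolding m_def using Kf by simp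
  have D0: "D (u-1) = 0" unfolding D_def cnt_def by simp
  have m0: "m \<le> 0" using mle[of "u-1"] D0 unfolding K_def by simp
  define k where "k = Max {k\<in>K. D k = m}"
  have Sf: "finite {k\<in>K. D k = m}" "{k\<in>K. D k = m} \<noteq> {}" using Kf mK by auto
  have kS: "k \<in> {k\<in>K. D k = m}" unfolding k_def using Sf by (rule Max_in)
  have kmax: "\<And>k'. k' \<in> K \<Longrightarrow> D k' = m \<Longrightarrow> k' \<le> k" unfolding k_def using Sf by simp
  have Dend: "D j \<ge> 1" if "j \<ge> u + int l" for j using A that unfolding D_def by fastforce
  have kne: "k \<noteq> u + int l" using Dend[of "u + int l"] kS m0 by auto
  have kK: "u - 1 \<le> k" "k < u + int l" using kS kne unfolding K_def by auto
  have gt: "D j > D k" if "j > k" for j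
  proof (cases "j \<le> u + int l")
    case True
    hence "j \<in> K" using that kK unfolding K_def by auto
    hence "m \<le> D j" "D j \<noteq> m" using mle kmax[of j] that by auto
    thus ?thesis using kS by auto
  next
    case False
    thus ?thesis using Dend[of j] kS m0 by auto
  qed
  define i where "i = k + 1"
  have iI: "i \<in> {u..u+int l}" using kK unfolding i_def by auto
  have step: "D i = D k + (if s i then 1 else 0) - (if a i then 1 else 0)"
    unfolding D_def i_def using kK by (simp add: cnt_Suc)
  have si: "s i \<and> \<not> a i" using gt[of i] step unfolding i_def by (auto split: if_splits)
  have Di: "D i = D k + 1" using step si by simp
  have "\<not> (\<exists>j\<in>{i..}. 1 \<le> cnt a (i+1) j - cnt s (i+1) j)"
  proof
    assume "\<exists>j\<in>{i..}. 1 \<le> cnt a (i+1) j - cnt s (i+1) j"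
    then obtain j where j: "j \<ge> i" "1 \<le> cnt a (i+1) j - cnt s (i+1) j" by auto
    have "cnt a (i+1) j - cnt s (i+1) j = D i - D j"
      using cnt_split[of u i j a] cnt_split[of u i j s] j kK unfolding D_def i_def by simp
    moreover have "D j > D k" using gt[of j] j unfolding i_def by simp
    ultimately show False using j Di by simp
  qed
  thus ?thesis using iI si eta2_iff by blast
qed



lemma bern_coord[measurable]: "(\<lambda>\<omega>. \<omega> k) \<in> bern_fam p \<rightarrow>\<^sub>M count_space UNIV"
proof -
  have "(\<lambda>\<omega>. \<omega> k) \<in> PiM UNIV (\<lambda>_::int. measure_pmf (bernoulli_pmf p)) \<rightarrow>\<^sub>M measure_pmf (bernoulli_pmf p)"
    by (rule measurable_component_singleton) simp
  also have "\<dots> = PiM UNIV (\<lambda>_::int. measure_pmf (bernoulli_pmf p)) \<rightarrow>\<^sub>M count_space UNIV"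
    by (rule measurable_cong_sets) auto
  finally show ?thesis unfolding bern_fam_def .
qed

lemma bern_sum_meas: "(\<lambda>y. (\<Sum>k\<in>J. if y k then 1 else (0::real))) \<in> borel_measurable (bern_fam p)"
  by (intro borel_measurable_sum measurable_compose[OF bern_coord borel_measurable_count_space])

lemma sets_bern_sum:
  fixes t :: real
  shows "{y \<in> space (bern_fam p). (\<Sum>k\<in>J. if y k then 1 else (0::real)) \<le> t} \<in> sets (bern_fam p)"
    "{y \<in> space (bern_fam p). (\<Sum>k\<in>J. if y k then 1 else (0::real)) \<ge> t} \<in> sets (bern_fam p)"
proof -
  have "{y \<in> space (bern_fam p). (\<Sum>k\<in>J. if y k then 1 else (0::real)) \<le> t} = 
     (\<lambda>y. (\<Sum>k\<in>J. if y k then 1 else (0::real))) -` {..t} \<inter> space (bern_fam p)" by auto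
  thus "{y \<in> space (bern_fam p). (\<Sum>k\<in>J. if y k then 1 else (0::real)) \<le> t} \<in> sets (bern_fam p)"
    using measurable_sets[OF bern_sum_meas] by simp
  have "{y \<in> space (bern_fam p). (\<Sum>k\<in>J. if y k then 1 else (0::real)) \<ge> t} = 
     (\<lambda>y. (\<Sum>k\<in>J. if y k then 1 else (0::real))) -` {t..} \<inter> space (bern_fam p)" by auto
  thus "{y \<in> space (bern_fam p). (\<Sum>k\<in>J. if y k then 1 else (0::real)) \<ge> t} \<in> sets (bern_fam p)"
    using measurable_sets[OF bern_sum_meas] by simp
qed

lemma cnt_real: "real_of_int (cnt x i j) = (\<Sum>k\<in>{i..j}. if x k then 1 else (0::real))"
  unfolding cnt_def of_int_sum by (intro sum.cong) auto

lemma q_fst[measurable]: "(\<lambda>\<omega>. fst \<omega> k) \<in> queue_space r1 r2 \<rightarrow>\<^sub>M count_space UNIV"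
  unfolding queue_space_def by (rule measurable_compose[OF measurable_fst bern_coord])

lemma q_snd[measurable]: "(\<lambda>\<omega>. snd \<omega> k) \<in> queue_space r1 r2 \<rightarrow>\<^sub>M count_space UNIV"
  unfolding queue_space_def by (rule measurable_compose[OF measurable_snd bern_coord])

lemma q_sum_fst[measurable]: "(\<lambda>\<omega>. (\<Sum>k\<in>J. if fst \<omega> k then 1 else (0::real))) \<in> borel_measurable (queue_space r1 r2)"
  by (intro borel_measurable_sum measurable_compose[OF q_fst borel_measurable_count_space])

lemma q_sum_snd[measurable]: "(\<lambda>\<omega>. (\<Sum>k\<in>J. if snd \<omega> k then 1 else (0::real))) \<in> borel_measurable (queue_space r1 r2)"
  by (intro borel_measurable_sum measurable_compose[OF q_snd borel_measurable_count_space])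

lemma sets_T:
  "{\<omega>\<in>space (queue_space r1 r2). \<exists>i\<in>{u..u + int l}. eta (fst \<omega>) (snd \<omega>) i = 2} \<in> sets (queue_space r1 r2)"
proof -
  have e: "{\<omega>\<in>space (queue_space r1 r2). \<exists>i\<in>{u..u + int l}. eta (fst \<omega>) (snd \<omega>) i = 2}
    = {\<omega>\<in>space (queue_space r1 r2). \<exists>i\<in>{u..u + int l}. snd \<omega> i \<and> \<not> fst \<omega> i \<and>
        \<not> (\<exists>j\<in>{i..}. 1 \<le> (\<Sum>k\<in>{i+1..j}. if fst \<omega> k then 1 else (0::real)) - (\<Sum>k\<in>{i+1..j}. if snd \<omega> k then 1 else (0::real)))}"
  proof -
    have "\<And>x y i j. (1 \<le> cnt x (i+1) j - cnt y (i+1) j) = (1 \<le> (\<Sum>k\<in>{i+1..j}. if x k then 1 else (0::real)) - (\<Sum>k\<in>{i+1..j}. if y k then 1 else (0::real)))"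
      by (simp flip: cnt_real of_int_diff)
    thus ?thesis by (simp add: eta2_iff)
  qed
  show ?thesis unfolding e by measurable
qed



theorem lemma3p2:
  fixes \<rho>1 \<rho>2 :: real
  assumes "0 < \<rho>1" "\<rho>1 < 1" "0 < \<rho>2" "\<rho>2 < 1 - \<rho>1"
  shows "\<exists>C c. C > 0 \<and> c > 0 \<and>
    (\<forall>(u::int) (l::nat).
       measure (queue_space \<rho>1 \<rho>2)
         {\<omega> \<in> space (queue_space \<rho>1 \<rho>2). \<exists>i\<in>{u..u + int l}. eta (fst \<omega>) (snd \<omega>) i = 2}
       \<ge> 1 - C * exp (- c * real l))"
proof -
  define Q where "Q = queue_space \<rho>1 \<rho>2"
  interpret pair_prob_space "bern_fam \<rho>1" "bern_fam (\<rho>1 + \<rho>2)"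
    by (intro pair_prob_space.intro pair_sigma_finite.intro ps_bern prob_space_imp_sigma_finite)
  have psQ: "prob_space Q" unfolding Q_def queue_space_def by (rule P.prob_space_axioms)
  interpret Q: prob_space Q by (rule psQ)
  define c where "c = \<rho>2\<^sup>2 / 2"
  have c: "c > 0" using assms unfolding c_def by simp
  define r where "r = exp (- c)"
  have r: "0 < r" "r < 1" using c unfolding r_def by auto
  define C where "C = 2 / (1 - r)"
  have C: "C > 0" using r unfolding C_def by simp
  have main: "measure Q {\<omega> \<in> space Q. \<exists>i\<in>{u..u + int l}. eta (fst \<omega>) (snd \<omega>) i = 2}
       \<ge> 1 - C * exp (- c * real l)" for u l
  proof -
    define J where "J m = {u..u + int l + int m}" for m :: nat
    define N where "N m = real (l + m + 1)" for m :: nat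
    have cardJ: "real (card (J m)) = N m" for m
      unfolding J_def N_def by simp
    have finJ: "finite (J m)" "J m \<noteq> {}" for m unfolding J_def by auto
    define S where "S m = {\<omega>\<in>space Q. (\<Sum>k\<in>J m. if snd \<omega> k then 1 else (0::real)) \<le> N m * (\<rho>1 + \<rho>2) - N m * \<rho>2 / 2}" for m
    define A where "A m = {\<omega>\<in>space Q. (\<Sum>k\<in>J m. if fst \<omega> k then 1 else (0::real)) \<ge> N m * \<rho>1 + N m * \<rho>2 / 2}" for m
    define E where "E m = S m \<union> A m" for m
    define T where "T = {\<omega> \<in> space Q. \<exists>i\<in>{u..u + int l}. eta (fst \<omega>) (snd \<omega>) i = 2}"
    have Tm: "T \<in> sets Q" unfolding T_def Q_def by (rule sets_T)
    have Sm: "S m \<in> sets Q" for m unfolding S_def Q_def by measurable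
    have Am: "A m \<in> sets Q" for m unfolding A_def Q_def by measurable
    have Em: "E m \<in> sets Q" for m unfolding E_def using Sm Am by auto
    have expeq: "exp (-2 * (N m * \<rho>2 / 2)\<^sup>2 / N m) = exp (- c * N m)" for m
    proof -
      have "N m > 0" unfolding N_def by simp
      hence "-2 * (N m * \<rho>2 / 2)\<^sup>2 / N m = - c * N m" unfolding c_def by (simp add: field_simps power2_eq_square)
      thus ?thesis by simp
    qed
    have eps: "N m * \<rho>2 / 2 \<ge> 0" for m unfolding N_def using assms by simp
    have Sb: "measure Q (S m) \<le> exp (- c * N m)" for m
    proof -
      have "measure Q (S m) = measure (bern_fam (\<rho>1 + \<rho>2)) {y\<in>space (bern_fam (\<rho>1 + \<rho>2)).
              (\<Sum>k\<in>J m. if y k then 1 else (0::real)) \<le> real (card (J m)) * (\<rho>1 + \<rho>2) - N m * \<rho>2 / 2}"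
        unfolding S_def Q_def queue_space_def cardJ by (rule Q_snd[OF sets_bern_sum(1)])
      also have "\<dots> \<le> exp (-2 * (N m * \<rho>2 / 2)\<^sup>2 / real (card (J m)))"
        by (rule bern_tail(1)[OF finJ]) (use assms eps in auto)
      finally show ?thesis unfolding cardJ expeq .
    qed
    have Ab: "measure Q (A m) \<le> exp (- c * N m)" for m
    proof -
      have "measure Q (A m) = measure (bern_fam \<rho>1) {y\<in>space (bern_fam \<rho>1).
              (\<Sum>k\<in>J m. if y k then 1 else (0::real)) \<ge> real (card (J m)) * \<rho>1 + N m * \<rho>2 / 2}"
        unfolding A_def Q_def queue_space_def cardJ by (rule Q_fst[OF sets_bern_sum(2)])
      also have "\<dots> \<le> exp (-2 * (N m * \<rho>2 / 2)\<^sup>2 / real (card (J m)))"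
        by (rule bern_tail(2)[OF finJ]) (use assms eps in auto)
      finally show ?thesis unfolding cardJ expeq .
    qed
    define g where "g m = 2 * exp (- c * real (l + 1)) * r ^ m" for m
    have Eb: "measure Q (E m) \<le> g m" for m
    proof -
      have "measure Q (E m) \<le> measure Q (S m) + measure Q (A m)"
        unfolding E_def by (rule measure_Un_le[OF Sm Am])
      also have "\<dots> \<le> 2 * exp (- c * N m)" using Sb[of m] Ab[of m] by simp
      also have "exp (- c * N m) = exp (- c * real (l + 1)) * r ^ m"
        unfolding r_def N_def by (simp add: exp_of_nat_mult[symmetric] exp_add[symmetric] algebra_simps)
      finally show ?thesis unfolding g_def by simp
    qed
    have gs: "summable g" unfolding g_def using r by (intro summable_mult summable_geometric) simp
    have gsum: "suminf g = 2 * exp (- c * real (l + 1)) / (1 - r)"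
      unfolding g_def using r by (subst suminf_mult) (auto simp: suminf_geometric summable_geometric)
    have Es: "summable (\<lambda>m. measure Q (E m))"
      by (rule summable_comparison_test[OF _ gs]) (use Eb in auto)
    have sub: "space Q - T \<subseteq> (\<Union>m. E m)"
    proof
      fix \<omega> assume w: "\<omega> \<in> space Q - T"
      have "\<not> (\<forall>j\<ge>u + int l. cnt (fst \<omega>) u j < cnt (snd \<omega>) u j)"
        using comb[of u l "fst \<omega>" "snd \<omega>"] w unfolding T_def by auto
      then obtain j where j: "j \<ge> u + int l" "cnt (snd \<omega>) u j \<le> cnt (fst \<omega>) u j" by auto
      define m where "m = nat (j - u - int l)"
      have jm: "J m = {u..j}" unfolding J_def m_def using j by auto
      have "(\<Sum>k\<in>J m. if snd \<omega> k then 1 else (0::real)) \<le> (\<Sum>k\<in>J m. if fst \<omega> k then 1 else (0::real))"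
        using j(2) unfolding jm cnt_real[symmetric] by simp
      hence "\<omega> \<in> S m \<or> \<omega> \<in> A m" using w unfolding S_def A_def by (auto simp: algebra_simps)
      thus "\<omega> \<in> (\<Union>m. E m)" unfolding E_def by auto
    qed
    have "measure Q (space Q - T) \<le> measure Q (\<Union>m. E m)"
      by (rule Q.finite_measure_mono[OF sub]) (use Em in auto)
    also have "\<dots> \<le> (\<Sum>m. measure Q (E m))"
      by (rule Q.finite_measure_subadditive_countably) (use Em Es in auto)
    also have "\<dots> \<le> suminf g" by (rule suminf_le[OF Eb Es gs])
    also have "\<dots> \<le> C * exp (- c * real l)"
    proof -
      have "exp (- c * real (l + 1)) \<le> exp (- c * real l)" using c by simp
      hence "2 * exp (- c * real (l + 1)) / (1 - r) \<le> 2 * exp (- c * real l) / (1 - r)"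
        using r by (intro divide_right_mono) auto
      thus ?thesis unfolding gsum C_def by simp
    qed
    finally have "measure Q (space Q - T) \<le> C * exp (- c * real l)" .
    moreover have "measure Q (space Q - T) = 1 - measure Q T" by (rule Q.prob_compl[OF Tm])
    ultimately show ?thesis unfolding T_def by simp
  qed
  show ?thesis using C c main unfolding Q_def by blast
qed

end
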